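(* With the notation of the context, for all admissible fixed frequencies, $$|S_{kk_1}|\lesssim (N_2\wedge N_3)^{2-\alpha}\langle k_1-k\rangle^{-1}+1,\qquad |S_{kk_3}|\lesssim (N_1\wedge N_2)^{2-\alpha}\langle k-k_3\rangle^{-1}+1,$$ $$|S_{k_1k_2}|\lesssim N_3^{2-\alpha}\langle k_1-k_2\rangle^{-1}+1,\qquad |S_{k_2k_3}|\lesssim N_1^{2-\alpha}\langle k_2-k_3\rangle^{-1}+1.$$
   Context: Fix $\alpha\in(1,2)$, dyadic numbers $1\le N_1,N_2,N_3\le N$, a real number $m$ and a constant $C_0>0$. Let $S$ be the set of $(k,k_1,k_2,k_3)\in\mathbb Z^4$ with $k=k_1-k_2+k_3$, $k_2\notin\{k_1,k_3\}$, $\big||k_1|^\alpha-|k_2|^\alpha+|k_3|^\alpha-|k|^\alpha-m\big|\le C_0$, $|k|\le N$ and $|k_j|\le N_j$ for $j=1,2,3$. When some of the variables are fixed, $S$ with those variables as subscripts denotes the set of the remaining variables for which the quadruple lies in $S$ (e.g. $S_{kk_1}=\{(k_2,k_3):(k,k_1,k_2,k_3)\in S\}$, $S_k=\{(k_1,k_2,k_3):(k,k_1,k_2,k_3)\in S\}$). $|A|$ is the cardinality of $A$, $\langle x\rangle=(1+|x|^2)^{1/2}$, $a\wedge b=\min(a,b)$, $a\vee b=\max(a,b)$. $A\lesssim B$ means $A\le CB$ with $C$ depending only on $\alpha$ and $C_0$ (uniform in $m$, the $N$'s and the fixed frequencies). *)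

theory Defs
  imports Complex_Main
begin

definition dyadic :: "real \<Rightarrow> bool" where
  "dyadic N \<longleftrightarrow> (\<exists>j::nat. N = 2 ^ j)"

definition jbr :: "real \<Rightarrow> real" where
  "jbr x = sqrt (1 + x\<^sup>2)"

definition Sset :: "real \<Rightarrow> real \<Rightarrow> real \<Rightarrow> real \<Rightarrow> real \<Rightarrow> real \<Rightarrow> real
    \<Rightarrow> (int \<times> int \<times> int \<times> int) set" where
  "Sset \<alpha> C0 m N N1 N2 N3 =
     {(k, k1, k2, k3). k = k1 - k2 + k3 \<and> k2 \<noteq> k1 \<and> k2 \<noteq> k3 \<and>
        \<bar>\<bar>real_of_int k1\<bar> powr \<alpha> - \<bar>real_of_int k2\<bar> powr \<alpha> + \<bar>real_of_int k3\<bar> powr \<alpha>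
          - \<bar>real_of_int k\<bar> powr \<alpha> - m\<bar> \<le> C0 \<and>
        \<bar>real_of_int k\<bar> \<le> N \<and> \<bar>real_of_int k1\<bar> \<le> N1 \<and>
        \<bar>real_of_int k2\<bar> \<le> N2 \<and> \<bar>real_of_int k3\<bar> \<le> N3}"

end

theory Submission imports Defs begin

lemma deriv_h:
  fixes t a :: real assumes "t \<noteq> 0"
  shows "((\<lambda>s. \<bar>s\<bar> powr a) has_real_derivative a * sgn t * \<bar>t\<bar> powr (a-1)) (at t)"
proof (cases "t > 0")
  case True
  have ev: "eventually (\<lambda>s. \<bar>s\<bar> powr a = s powr a) (nhds t)"
  proof -
    have "eventually (\<lambda>s. s \<in> {0<..}) (nhds t)"
      by (rule eventually_nhds_in_open) (auto simp: True)
    then show ?thesis by eventually_elim auto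
  qed
  show ?thesis
    apply (subst DERIV_cong_ev[OF refl ev refl])
    using has_real_derivative_powr[OF True, of a] True by simp
next
  case False
  then have tn: "t < 0" using assms by simp
  have ev: "eventually (\<lambda>s. \<bar>s\<bar> powr a = (-s) powr a) (nhds t)"
  proof -
    have "eventually (\<lambda>s. s \<in> {..<0}) (nhds t)"
      by (rule eventually_nhds_in_open) (auto simp: tn)
    then show ?thesis by eventually_elim auto
  qed
  have d: "((\<lambda>s. (-s) powr a) has_real_derivative a * (-t) powr (a - of_nat 1) * (-1)) (at t)"
    by (rule DERIV_fun_powr) (auto intro!: derivative_eq_intros simp: tn)
  show ?thesis
    apply (subst DERIV_cong_ev[OF refl ev refl])
    using d tn by simp
qed

lemma cont_h:
  fixes a :: real assumes "a > 0"
  shows "continuous_on S (\<lambda>s::real. \<bar>s\<bar> powr a)"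
  by (rule continuous_on_powr') (auto intro!: continuous_intros simp: assms)

lemma pos_incr:
  fixes a b \<beta> :: real
  assumes "0 \<le> a" "a < b" "0 < \<beta>" "\<beta> < 1"
  shows "b powr \<beta> - a powr \<beta> \<ge> \<beta> * (b - a) * (a + b) powr (\<beta> - 1)"
proof -
  have c: "continuous_on {a..b} (\<lambda>s. s powr \<beta>)"
    by (rule continuous_on_powr') (use assms in \<open>auto intro!: continuous_intros\<close>)
  have dd: "\<And>x. a < x \<Longrightarrow> x < b \<Longrightarrow> (\<lambda>s. s powr \<beta>) differentiable (at x)"
    using has_real_derivative_powr assms real_differentiable_def
    by (metis le_less_trans)
  obtain l z where z: "a < z" "z < b" "DERIV (\<lambda>s. s powr \<beta>) z :> l" "b powr \<beta> - a powr \<beta> = (b - a) * l"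
    using MVT[OF assms(2) c dd] by blast
  have zp: "z > 0" using z assms by linarith
  have "l = \<beta> * z powr (\<beta> - 1)"
    using DERIV_unique[OF z(3) has_real_derivative_powr[OF zp]] .
  moreover have "(a + b) powr (\<beta> - 1) \<le> z powr (\<beta> - 1)"
    by (rule powr_mono2') (use assms z in auto)
  ultimately show ?thesis using z(4) assms z
    by (simp add: mult_left_mono mult.assoc)
qed

lemma subadd:
  fixes x y \<beta> :: real
  assumes "0 \<le> x" "0 \<le> y" "0 < \<beta>" "\<beta> \<le> 1"
  shows "(x + y) powr \<beta> \<le> x powr \<beta> + y powr \<beta>"
proof (cases "x + y = 0")
  case True then show ?thesis using assms by simp
next
  case False
  then have s: "x + y > 0" using assms by simp
  have e0: "(x+y) powr (\<beta>-1) * (x+y) = (x+y) powr \<beta>"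
    using s by (simp add: powr_diff)
  have e: "(x+y) powr \<beta> = (x+y) powr (\<beta>-1) * x + (x+y) powr (\<beta>-1) * y"
    using e0 by (simp add: distrib_left)
  have hx: "(x+y) powr (\<beta>-1) * x \<le> x powr \<beta>"
  proof (cases "x = 0")
    case True then show ?thesis by simp
  next
    case False
    then have "x > 0" using assms by simp
    then have "(x+y) powr (\<beta>-1) \<le> x powr (\<beta>-1)"
      by (intro powr_mono2') (use assms in auto)
    then show ?thesis using \<open>x>0\<close> by (simp add: powr_diff field_simps)
  qed
  have hy: "(x+y) powr (\<beta>-1) * y \<le> y powr \<beta>"
  proof (cases "y = 0")
    case True then show ?thesis by simp
  next
    case False
    then have "y > 0" using assms by simp
    then have "(x+y) powr (\<beta>-1) \<le> y powr (\<beta>-1)"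
      by (intro powr_mono2') (use assms in auto)
    then show ?thesis using \<open>y>0\<close> by (simp add: powr_diff field_simps)
  qed
  show ?thesis using e hx hy by simp
qed

lemma g_incr:
  fixes a b \<beta> :: real
  assumes "a < b" "0 < \<beta>" "\<beta> < 1"
  shows "\<beta> * (b - a) * (\<bar>a\<bar> + \<bar>b\<bar>) powr (\<beta> - 1)
          \<le> sgn b * \<bar>b\<bar> powr \<beta> - sgn a * \<bar>a\<bar> powr \<beta>"
proof -
  consider "0 \<le> a" | "b \<le> 0" | "a < 0" "0 < b" by linarith
  then show ?thesis
  proof cases
    case 1
    have h: "sgn b * \<bar>b\<bar> powr \<beta> - sgn a * \<bar>a\<bar> powr \<beta> = b powr \<beta> - a powr \<beta>"
      using 1 assms by (cases "a = 0") auto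
    have h2: "\<bar>a\<bar> + \<bar>b\<bar> = a + b" using 1 assms by auto
    show ?thesis unfolding h h2 using pos_incr[OF 1 assms] .
  next
    case 2
    have "sgn b * \<bar>b\<bar> powr \<beta> = - (\<bar>b\<bar> powr \<beta>)" using 2 by (cases "b = 0") auto
    moreover have "sgn a * \<bar>a\<bar> powr \<beta> = - (\<bar>a\<bar> powr \<beta>)" using 2 assms by auto
    moreover have "\<bar>b\<bar> < \<bar>a\<bar>" using 2 assms by auto
    ultimately show ?thesis using pos_incr[of "\<bar>b\<bar>" "\<bar>a\<bar>" \<beta>] 2 assms
      by (simp add: add.commute)
  next
    case 3
    have e: "sgn b * \<bar>b\<bar> powr \<beta> - sgn a * \<bar>a\<bar> powr \<beta> = b powr \<beta> + \<bar>a\<bar> powr \<beta>"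
      using 3 by simp
    have s1: "(\<bar>a\<bar> + b) powr \<beta> \<le> \<bar>a\<bar> powr \<beta> + b powr \<beta>"
      using subadd[of "\<bar>a\<bar>" b \<beta>] 3 assms by simp
    have pos: "\<bar>a\<bar> + b > 0" using 3 by simp
    have s2: "(\<bar>a\<bar> + b) powr \<beta> = (b - a) * (\<bar>a\<bar> + \<bar>b\<bar>) powr (\<beta> - 1)"
      using pos 3 by (simp add: powr_diff)
    have s3: "\<beta> * ((b - a) * (\<bar>a\<bar> + \<bar>b\<bar>) powr (\<beta> - 1)) \<le> (b - a) * (\<bar>a\<bar> + \<bar>b\<bar>) powr (\<beta> - 1)"
      using assms 3 by (intro mult_left_le_one_le) auto
    show ?thesis using e s1 s2 s3 by (simp add: mult.assoc)
  qed
qed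

definition FF :: "real \<Rightarrow> real \<Rightarrow> real \<Rightarrow> real" where
  "FF a d s = \<bar>s + d\<bar> powr a - \<bar>s\<bar> powr a"

lemma no_int_between:
  fixes z :: int and \<xi> :: real
  assumes "real_of_int z < \<xi>" "\<xi> < real_of_int z + 1"
  shows "\<xi> \<noteq> 0"
proof
  assume "\<xi> = 0"
  then have "z < 0" "0 < z + 1" using assms by linarith+
  then show False by linarith
qed

lemma step:
  fixes \<alpha> A B :: real and z d :: int
  assumes a1: "1 < \<alpha>" and a2: "\<alpha> < 2" and dp: "d > 0"
    and b1: "\<bar>real_of_int z\<bar> \<le> A" and b2: "\<bar>real_of_int z + 1\<bar> \<le> A"
    and b3: "\<bar>real_of_int z + d\<bar> \<le> B" and b4: "\<bar>real_of_int z + 1 + d\<bar> \<le> B"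
  shows "\<alpha> * (\<alpha> - 1) * d * (2 * min A B + d) powr (\<alpha> - 2)
          \<le> FF \<alpha> d (z + 1) - FF \<alpha> d z"
proof -
  define f where "f = (\<lambda>s::real. \<bar>s + d\<bar> powr \<alpha> - \<bar>s\<bar> powr \<alpha>)"
  have D: "DERIV f \<xi> :> \<alpha> * sgn (\<xi> + d) * \<bar>\<xi> + d\<bar> powr (\<alpha> - 1) - \<alpha> * sgn \<xi> * \<bar>\<xi>\<bar> powr (\<alpha> - 1)"
    if "real_of_int z < \<xi>" "\<xi> < real_of_int z + 1" for \<xi>
  proof -
    have n0: "\<xi> \<noteq> 0" using no_int_between that by blast
    have n1: "\<xi> + d \<noteq> 0" using no_int_between[of "z + d" "\<xi> + d"] that by simp
    have d1: "DERIV (\<lambda>s. \<bar>s + d\<bar> powr \<alpha>) \<xi> :> \<alpha> * sgn (\<xi> + d) * \<bar>\<xi> + d\<bar> powr (\<alpha> - 1) * 1"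
      by (rule DERIV_chain2[where f="\<lambda>s. \<bar>s\<bar> powr \<alpha>" and g="\<lambda>s. s + real_of_int d" and x=\<xi>,
            OF deriv_h[OF n1]]) (auto intro!: derivative_eq_intros)
    show ?thesis unfolding f_def using DERIV_diff[OF d1 deriv_h[OF n0, of \<alpha>]] by simp
  qed
  have c: "continuous_on {real_of_int z..real_of_int z + 1} f"
    unfolding f_def
    by (intro continuous_intros continuous_on_powr') (use a1 in auto)
  have dd: "\<And>x. real_of_int z < x \<Longrightarrow> x < real_of_int z + 1 \<Longrightarrow> f differentiable (at x)"
    using D real_differentiable_def by blast
  obtain l \<xi> where xi: "real_of_int z < \<xi>" "\<xi> < real_of_int z + 1" "DERIV f \<xi> :> l"
      "f (real_of_int z + 1) - f (real_of_int z) = (real_of_int z + 1 - real_of_int z) * l"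
    using MVT[OF _ c dd] by auto
  have l: "l = \<alpha> * sgn (\<xi> + d) * \<bar>\<xi> + d\<bar> powr (\<alpha> - 1) - \<alpha> * sgn \<xi> * \<bar>\<xi>\<bar> powr (\<alpha> - 1)"
    using DERIV_unique[OF xi(3) D[OF xi(1,2)]] .
  have g: "(\<alpha> - 1) * d * (\<bar>\<xi>\<bar> + \<bar>\<xi> + d\<bar>) powr (\<alpha> - 1 - 1)
          \<le> sgn (\<xi> + d) * \<bar>\<xi> + d\<bar> powr (\<alpha> - 1) - sgn \<xi> * \<bar>\<xi>\<bar> powr (\<alpha> - 1)"
    using g_incr[of \<xi> "\<xi> + d" "\<alpha> - 1"] a1 a2 dp by simp
  have xA: "\<bar>\<xi>\<bar> \<le> A" using b1 b2 xi(1,2) by linarith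
  have xB: "\<bar>\<xi> + d\<bar> \<le> B" using b3 b4 xi(1,2) by linarith
  have sum: "\<bar>\<xi>\<bar> + \<bar>\<xi> + d\<bar> \<le> 2 * min A B + d" using xA xB dp by linarith
  have sp: "\<bar>\<xi>\<bar> + \<bar>\<xi> + d\<bar> > 0" using dp by linarith
  have pm: "(2 * min A B + d) powr (\<alpha> - 2) \<le> (\<bar>\<xi>\<bar> + \<bar>\<xi> + d\<bar>) powr (\<alpha> - 2)"
    by (rule powr_mono2') (use a2 sum sp in auto)
  have "\<alpha> * (\<alpha> - 1) * d * (2 * min A B + d) powr (\<alpha> - 2)
        \<le> \<alpha> * ((\<alpha> - 1) * d * (\<bar>\<xi>\<bar> + \<bar>\<xi> + d\<bar>) powr (\<alpha> - 2))"
    using pm a1 dp by (simp add: mult.assoc mult_left_mono)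
  also have "\<dots> \<le> \<alpha> * (sgn (\<xi> + d) * \<bar>\<xi> + d\<bar> powr (\<alpha> - 1) - sgn \<xi> * \<bar>\<xi>\<bar> powr (\<alpha> - 1))"
    using g a1 by (intro mult_left_mono) (auto simp: mult.assoc)
  also have "\<dots> = l" unfolding l by (simp add: right_diff_distrib mult.assoc)
  also have "l = FF \<alpha> d (z + 1) - FF \<alpha> d z" using xi(4) unfolding f_def FF_def by simp
  finally show ?thesis .
qed

lemma tele:
  fixes \<alpha> A B :: real and x y d :: int
  assumes a1: "1 < \<alpha>" and a2: "\<alpha> < 2" and dp: "d > 0"
    and x1: "\<bar>real_of_int x\<bar> \<le> A" and x2: "\<bar>real_of_int x + d\<bar> \<le> B"
    and y1: "\<bar>real_of_int y\<bar> \<le> A" and y2: "\<bar>real_of_int y + d\<bar> \<le> B"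
    and xy: "x \<le> y"
  shows "\<alpha> * (\<alpha> - 1) * d * (2 * min A B + d) powr (\<alpha> - 2) * (y - x)
          \<le> FF \<alpha> d y - FF \<alpha> d x"
proof -
  define \<delta> where "\<delta> = \<alpha> * (\<alpha> - 1) * d * (2 * min A B + d) powr (\<alpha> - 2)"
  have *: "x + int n \<le> y \<longrightarrow> \<delta> * real n \<le> FF \<alpha> d (x + int n) - FF \<alpha> d x" for n
  proof (induction n)
    case 0 then show ?case by simp
  next
    case (Suc n)
    show ?case
    proof
      assume h: "x + int (Suc n) \<le> y"
      define z where "z = x + int n"
      have zz: "real_of_int z \<ge> real_of_int x" "real_of_int z + 1 \<le> real_of_int y"
        using h unfolding z_def by simp_all
      have st: "\<delta> \<le> FF \<alpha> d (z + 1) - FF \<alpha> d z"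
        unfolding \<delta>_def
        by (rule step[OF a1 a2 dp]) (use x1 x2 y1 y2 zz in linarith)+
      have ih: "\<delta> * real n \<le> FF \<alpha> d z - FF \<alpha> d x" using Suc h unfolding z_def by simp
      have e: "real_of_int (x + int (Suc n)) = real_of_int z + 1" unfolding z_def by simp
      have "\<delta> * real (Suc n) = \<delta> + \<delta> * real n" by (simp add: distrib_left)
      then show "\<delta> * real (Suc n) \<le> FF \<alpha> d (x + int (Suc n)) - FF \<alpha> d x"
        unfolding e using st ih by (simp add: algebra_simps)
    qed
  qed
  have "x + int (nat (y - x)) = y" using xy by simp
  then show ?thesis using *[of "nat (y - x)"] xy unfolding \<delta>_def by simp
qed

lemma count_pos:
  fixes \<alpha> A B C0 c :: real and d :: int
  assumes a1: "1 < \<alpha>" and a2: "\<alpha> < 2" and dp: "d > 0" and C0: "C0 > 0"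
    and A: "A \<ge> 1" and B: "B \<ge> 1"
  shows "real (card {x::int. \<bar>real_of_int x\<bar> \<le> A \<and> \<bar>real_of_int x + d\<bar> \<le> B \<and> \<bar>FF \<alpha> d x - c\<bar> \<le> C0})
          \<le> 2 * C0 / (\<alpha> * (\<alpha> - 1) * d * (2 * min A B + d) powr (\<alpha> - 2)) + 1"
proof -
  define \<delta> where "\<delta> = \<alpha> * (\<alpha> - 1) * d * (2 * min A B + d) powr (\<alpha> - 2)"
  define T where "T = {x::int. \<bar>real_of_int x\<bar> \<le> A \<and> \<bar>real_of_int x + d\<bar> \<le> B \<and> \<bar>FF \<alpha> d x - c\<bar> \<le> C0}"
  have dpos: "\<delta> > 0" unfolding \<delta>_def using a1 dp A B by simp
  have fin: "finite T"
  proof (rule finite_subset)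
    show "T \<subseteq> {-\<lceil>A\<rceil>..\<lceil>A\<rceil>}"
    proof
      fix x assume "x \<in> T"
      then have "\<bar>real_of_int x\<bar> \<le> A" unfolding T_def by simp
      then have "real_of_int x \<le> A" "- A \<le> real_of_int x" by linarith+
      then show "x \<in> {-\<lceil>A\<rceil>..\<lceil>A\<rceil>}"
        by (simp add: ceiling_le_iff le_ceiling_iff) linarith
    qed
  qed simp
  show ?thesis
  proof (cases "T = {}")
    case True then show ?thesis unfolding T_def[symmetric] \<delta>_def[symmetric] using dpos C0 by simp
  next
    case False
    define x0 where "x0 = Min T"
    have x0T: "x0 \<in> T" unfolding x0_def using fin False by simp
    define q where "q = 2 * C0 / \<delta>"
    have sub: "T \<subseteq> {x0..x0 + \<lfloor>q\<rfloor>}"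
    proof
      fix y assume yT: "y \<in> T"
      have le: "x0 \<le> y" unfolding x0_def using fin yT by simp
      have "\<delta> * (y - x0) \<le> FF \<alpha> d y - FF \<alpha> d x0"
        unfolding \<delta>_def by (rule tele[OF a1 a2 dp]) (use x0T yT le in \<open>auto simp: T_def\<close>)
      also have "\<dots> \<le> 2 * C0" using x0T yT unfolding T_def by auto
      finally have "real_of_int (y - x0) \<le> q" unfolding q_def using dpos
        by (simp add: field_simps)
      then have "y - x0 \<le> \<lfloor>q\<rfloor>" by (simp add: le_floor_iff)
      then show "y \<in> {x0..x0 + \<lfloor>q\<rfloor>}" using le by simp
    qed
    have "card T \<le> card {x0..x0 + \<lfloor>q\<rfloor>}" by (rule card_mono[OF _ sub]) simp
    also have "\<dots> = nat (\<lfloor>q\<rfloor> + 1)" by simp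
    finally have "real (card T) \<le> real (nat (\<lfloor>q\<rfloor> + 1))" by linarith
    also have "\<dots> \<le> q + 1" using dpos C0 unfolding q_def
      by (simp add: of_nat_nat)
    finally show ?thesis unfolding T_def q_def \<delta>_def .
  qed
qed

lemma jbr_le: assumes "x \<ge> 1" shows "jbr x \<le> 2 * x"
proof -
  have "1 \<le> x * x" using mult_mono[of 1 x 1 x] assms by simp
  then show ?thesis unfolding jbr_def
    by (intro real_le_lsqrt) (use assms in \<open>auto simp: power2_eq_square\<close>)
qed

lemma jbr_pos: "jbr x > 0"
  unfolding jbr_def by (simp add: add_pos_nonneg)

lemma bound_pos:
  fixes \<alpha> A B C0 :: real and d :: int
  assumes a1: "1 < \<alpha>" and a2: "\<alpha> < 2" and dp: "d > 0" and C0: "C0 > 0"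
    and A: "A \<ge> 1" and B: "B \<ge> 1"
  shows "2 * C0 / (\<alpha> * (\<alpha> - 1) * d * (2 * min A B + d) powr (\<alpha> - 2)) + 1
     \<le> (12 * C0 / (\<alpha> * (\<alpha> - 1)) + 1) * ((min A B) powr (2 - \<alpha>) / jbr d + 1)"
proof -
  define m where "m = min A B"
  define E where "E = \<alpha> * (\<alpha> - 1)"
  define P where "P = (2 * m + d) powr (2 - \<alpha>)"
  define W where "W = m powr (2 - \<alpha>) / jbr d"
  have m1: "m \<ge> 1" unfolding m_def using A B by simp
  have d1: "real_of_int d \<ge> 1" using dp by simp
  have Ep: "E > 0" unfolding E_def using a1 by simp
  have Wn: "W \<ge> 0" unfolding W_def using jbr_pos[of d] by simp
  have pp: "2 * m + d > 0" using m1 d1 by simp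
  have inv: "1 / (2 * m + d) powr (\<alpha> - 2) = P"
    unfolding P_def using pp by (simp add: powr_minus_divide[symmetric] powr_minus)
  have "P \<le> (3 * max m d) powr (2 - \<alpha>)"
    unfolding P_def by (rule powr_mono2) (use a2 pp in auto)
  also have "\<dots> = 3 powr (2 - \<alpha>) * (max m d) powr (2 - \<alpha>)"
    using m1 by (simp add: powr_mult)
  also have "\<dots> \<le> 3 * (m powr (2 - \<alpha>) + d powr (2 - \<alpha>))"
  proof (rule mult_mono)
    show "3 powr (2 - \<alpha>) \<le> 3" using powr_mono[of "2 - \<alpha>" 1 3] a1 by simp
    show "max m d powr (2 - \<alpha>) \<le> m powr (2 - \<alpha>) + d powr (2 - \<alpha>)"
      by (cases "m \<le> d") (auto simp: max_def)
  qed auto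
  also have "\<dots> \<le> 3 * (m powr (2 - \<alpha>) + d)"
    using powr_mono[of "2 - \<alpha>" 1 d] a1 d1 by simp
  finally have P1: "P \<le> 3 * (m powr (2 - \<alpha>) + d)" .
  have j: "1 / real_of_int d \<le> 2 / jbr d"
    using jbr_le[OF d1] jbr_pos[of d] d1 by (simp add: field_simps)
  have "P / d \<le> 3 * (m powr (2 - \<alpha>) / d) + 3"
    using P1 d1 by (simp add: field_simps)
  also have "\<dots> \<le> 3 * (m powr (2 - \<alpha>) * (2 / jbr d)) + 3"
    using j mult_left_mono[OF j, of "m powr (2 - \<alpha>)"] by simp
  also have "\<dots> = 6 * W + 3" unfolding W_def by simp
  finally have Pd: "P / d \<le> 6 * W + 3" .
  have "2 * C0 / (\<alpha> * (\<alpha> - 1) * d * (2 * min A B + d) powr (\<alpha> - 2))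
      = (2 * C0 / E) * (P / d)"
    unfolding m_def[symmetric] E_def[symmetric] inv[symmetric] by simp
  also have "\<dots> \<le> (2 * C0 / E) * (6 * W + 3)"
    by (rule mult_left_mono[OF Pd]) (use C0 Ep in simp)
  also have "\<dots> \<le> (12 * C0 / E) * (W + 1)"
    using C0 Ep Wn by (simp add: field_simps)
  finally have "2 * C0 / (\<alpha> * (\<alpha> - 1) * d * (2 * min A B + d) powr (\<alpha> - 2)) + 1
       \<le> (12 * C0 / E) * (W + 1) + 1 * (W + 1)" using Wn by simp
  also have "\<dots> = (12 * C0 / E + 1) * (W + 1)" by (simp add: distrib_right)
  finally show ?thesis unfolding E_def W_def m_def .
qed

lemma count_gen:
  fixes \<alpha> A B C0 c :: real and d :: int
  assumes a1: "1 < \<alpha>" and a2: "\<alpha> < 2" and dn: "d \<noteq> 0" and C0: "C0 > 0"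
    and A: "A \<ge> 1" and B: "B \<ge> 1"
  shows "real (card {x::int. \<bar>real_of_int x\<bar> \<le> A \<and> \<bar>real_of_int x + d\<bar> \<le> B \<and> \<bar>FF \<alpha> d x - c\<bar> \<le> C0})
          \<le> (12 * C0 / (\<alpha> * (\<alpha> - 1)) + 1) * ((min A B) powr (2 - \<alpha>) / jbr d + 1)"
proof (cases "d > 0")
  case True
  show ?thesis using count_pos[OF a1 a2 True C0 A B, of c] bound_pos[OF a1 a2 True C0 A B] by linarith
next
  case False
  define d' where "d' = - d"
  have dp: "d' > 0" using False dn unfolding d'_def by simp
  define T' where "T' = {x::int. \<bar>real_of_int x\<bar> \<le> B \<and> \<bar>real_of_int x + d'\<bar> \<le> A \<and> \<bar>FF \<alpha> d' x - (-c)\<bar> \<le> C0}"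
  have eq: "{x::int. \<bar>real_of_int x\<bar> \<le> A \<and> \<bar>real_of_int x + d\<bar> \<le> B \<and> \<bar>FF \<alpha> d x - c\<bar> \<le> C0}
        = (\<lambda>x'. x' - d) ` T'"
  proof (rule set_eqI, rule iffI)
    fix x assume h: "x \<in> {x::int. \<bar>real_of_int x\<bar> \<le> A \<and> \<bar>real_of_int x + d\<bar> \<le> B \<and> \<bar>FF \<alpha> d x - c\<bar> \<le> C0}"
    have "x + d \<in> T'" using h unfolding T'_def d'_def FF_def by (auto simp: abs_minus_commute)
    then show "x \<in> (\<lambda>x'. x' - d) ` T'" by (rule rev_image_eqI) simp
  next
    fix x assume "x \<in> (\<lambda>x'. x' - d) ` T'"
    then obtain x' where "x' \<in> T'" "x = x' - d" by blast
    then show "x \<in> {x::int. \<bar>real_of_int x\<bar> \<le> A \<and> \<bar>real_of_int x + d\<bar> \<le> B \<and> \<bar>FF \<alpha> d x - c\<bar> \<le> C0}"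
      unfolding T'_def d'_def FF_def by (auto simp: abs_minus_commute)
  qed
  have "card ((\<lambda>x'. x' - d) ` T') = card T'" by (rule card_image) (simp add: inj_on_def)
  moreover have "real (card T') \<le> (12 * C0 / (\<alpha> * (\<alpha> - 1)) + 1) * ((min B A) powr (2 - \<alpha>) / jbr d' + 1)"
    using count_pos[OF a1 a2 dp C0 B A, of "-c"] bound_pos[OF a1 a2 dp C0 B A] unfolding T'_def by linarith
  moreover have "jbr d' = jbr d" unfolding jbr_def d'_def by simp
  ultimately show ?thesis unfolding eq by (simp add: min.commute)
qed

lemma fin_box: "finite {x::int. \<bar>real_of_int x\<bar> \<le> A \<and> Q x}"
proof (rule finite_subset)
  show "{x::int. \<bar>real_of_int x\<bar> \<le> A \<and> Q x} \<subseteq> {-\<lceil>A\<rceil>..\<lceil>A\<rceil>}"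
  proof
    fix x assume "x \<in> {x::int. \<bar>real_of_int x\<bar> \<le> A \<and> Q x}"
    then have "\<bar>real_of_int x\<bar> \<le> A" by simp
    then have "real_of_int x \<le> A" "- A \<le> real_of_int x" by linarith+
    then show "x \<in> {-\<lceil>A\<rceil>..\<lceil>A\<rceil>}"
      by (simp add: ceiling_le_iff le_ceiling_iff) linarith
  qed
qed simp

lemma transfer:
  fixes \<alpha> A B C0 c :: real and d :: int and P :: "'a set"
  assumes a1: "1 < \<alpha>" and a2: "\<alpha> < 2" and C0: "C0 > 0"
    and A: "A \<ge> 1" and B: "B \<ge> 1"
    and z: "d = 0 \<Longrightarrow> P = {}"
    and sub: "P \<subseteq> g ` {x::int. \<bar>real_of_int x\<bar> \<le> A \<and> \<bar>real_of_int x + d\<bar> \<le> B \<and> \<bar>FF \<alpha> d x - c\<bar> \<le> C0}"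
  shows "real (card P) \<le> (12 * C0 / (\<alpha> * (\<alpha> - 1)) + 1) * ((min A B) powr (2 - \<alpha>) / jbr d + 1)"
proof (cases "d = 0")
  case True
  have "0 \<le> (12 * C0 / (\<alpha> * (\<alpha> - 1)) + 1) * ((min A B) powr (2 - \<alpha>) / jbr d + 1)"
    using a1 C0 jbr_pos[of d] by (intro mult_nonneg_nonneg add_nonneg_nonneg) auto
  then show ?thesis using z[OF True] by simp
next
  case False
  let ?T = "{x::int. \<bar>real_of_int x\<bar> \<le> A \<and> \<bar>real_of_int x + d\<bar> \<le> B \<and> \<bar>FF \<alpha> d x - c\<bar> \<le> C0}"
  have fT: "finite ?T"
    by (rule fin_box[where Q="\<lambda>x. \<bar>real_of_int x + d\<bar> \<le> B \<and> \<bar>FF \<alpha> d x - c\<bar> \<le> C0"])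
  have "card P \<le> card (g ` ?T)" by (rule card_mono[OF _ sub]) (use fT in simp)
  also have "\<dots> \<le> card ?T" by (rule card_image_le[OF fT])
  finally have "real (card P) \<le> real (card ?T)" by simp
  also have "\<dots> \<le> (12 * C0 / (\<alpha> * (\<alpha> - 1)) + 1) * ((min A B) powr (2 - \<alpha>) / jbr d + 1)"
    by (rule count_gen[OF a1 a2 False C0 A B])
  finally show ?thesis .
qed

theorem lemma2p5:
  fixes \<alpha> C0 :: real
  assumes "1 < \<alpha>" "\<alpha> < 2" "0 < C0"
  shows "\<exists>C>0. \<forall>m N N1 N2 N3.
    dyadic N \<and> dyadic N1 \<and> dyadic N2 \<and> dyadic N3 \<and>
    1 \<le> N1 \<and> N1 \<le> N \<and> 1 \<le> N2 \<and> N2 \<le> N \<and> 1 \<le> N3 \<and> N3 \<le> N \<longrightarrow>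
    (\<forall>k k1. real (card {(k2, k3). (k, k1, k2, k3) \<in> Sset \<alpha> C0 m N N1 N2 N3})
        \<le> C * ((min N2 N3) powr (2 - \<alpha>) / jbr (real_of_int (k1 - k)) + 1)) \<and>
    (\<forall>k k3. real (card {(k1, k2). (k, k1, k2, k3) \<in> Sset \<alpha> C0 m N N1 N2 N3})
        \<le> C * ((min N1 N2) powr (2 - \<alpha>) / jbr (real_of_int (k - k3)) + 1)) \<and>
    (\<forall>k1 k2. real (card {(k, k3). (k, k1, k2, k3) \<in> Sset \<alpha> C0 m N N1 N2 N3})
        \<le> C * (N3 powr (2 - \<alpha>) / jbr (real_of_int (k1 - k2)) + 1)) \<and>
    (\<forall>k2 k3. real (card {(k, k1). (k, k1, k2, k3) \<in> Sset \<alpha> C0 m N N1 N2 N3})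
        \<le> C * (N1 powr (2 - \<alpha>) / jbr (real_of_int (k2 - k3)) + 1))"
proof -
  note a1 = assms(1) and a2 = assms(2) and C0 = assms(3)
  define K where "K = 12 * C0 / (\<alpha> * (\<alpha> - 1)) + 1"
  have Kp: "K > 0" unfolding K_def using a1 C0 by (simp add: add_nonneg_pos)
  define h where "h = (\<lambda>x::int. \<bar>real_of_int x\<bar> powr \<alpha>)"
  have hFF: "FF \<alpha> (real_of_int d) (real_of_int x) = h (x + d) - h x" for d x
    unfolding FF_def h_def by (simp add: add.commute)
  show ?thesis
  proof (rule exI[of _ K], intro conjI allI impI Kp)
    fix m N N1 N2 N3 :: real
    assume H: "dyadic N \<and> dyadic N1 \<and> dyadic N2 \<and> dyadic N3 \<and>
      1 \<le> N1 \<and> N1 \<le> N \<and> 1 \<le> N2 \<and> N2 \<le> N \<and> 1 \<le> N3 \<and> N3 \<le> N"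
    then have n1: "1 \<le> N1" and n2: "1 \<le> N2" and n3: "1 \<le> N3" and n: "1 \<le> N"
      and l1: "N1 \<le> N" and l3: "N3 \<le> N" by auto
    let ?S = "Sset \<alpha> C0 m N N1 N2 N3"
    have Sd: "(k, k1, k2, k3) \<in> ?S \<longleftrightarrow> k = k1 - k2 + k3 \<and> k2 \<noteq> k1 \<and> k2 \<noteq> k3 \<and>
        \<bar>h k1 - h k2 + h k3 - h k - m\<bar> \<le> C0 \<and>
        \<bar>real_of_int k\<bar> \<le> N \<and> \<bar>real_of_int k1\<bar> \<le> N1 \<and>
        \<bar>real_of_int k2\<bar> \<le> N2 \<and> \<bar>real_of_int k3\<bar> \<le> N3" for k k1 k2 k3
      unfolding Sset_def h_def by simp
    show "real (card {(k2, k3). (k, k1, k2, k3) \<in> ?S})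
        \<le> K * ((min N2 N3) powr (2 - \<alpha>) / jbr (real_of_int (k1 - k)) + 1)" for k k1
    proof -
      have "real (card {(k2, k3). (k, k1, k2, k3) \<in> ?S})
          \<le> K * ((min N3 N2) powr (2 - \<alpha>) / jbr (real_of_int (k1 - k)) + 1)"
        unfolding K_def
      proof (rule transfer[OF a1 a2 C0 n3 n2, where g="\<lambda>x. (x + (k1 - k), x)" and c="h k1 - h k - m"])
        show "k1 - k = 0 \<Longrightarrow> {(k2, k3). (k, k1, k2, k3) \<in> ?S} = {}" using Sd by auto
        show "{(k2, k3). (k, k1, k2, k3) \<in> ?S} \<subseteq> (\<lambda>x. (x + (k1 - k), x)) `
          {x. \<bar>real_of_int x\<bar> \<le> N3 \<and> \<bar>real_of_int x + real_of_int (k1 - k)\<bar> \<le> N2 \<and>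
              \<bar>FF \<alpha> (real_of_int (k1 - k)) (real_of_int x) - (h k1 - h k - m)\<bar> \<le> C0}"
        proof
          fix p assume "p \<in> {(k2, k3). (k, k1, k2, k3) \<in> ?S}"
          then obtain k2 k3 where p: "p = (k2, k3)" and S: "(k, k1, k2, k3) \<in> ?S" by blast
          have e: "k3 + (k1 - k) = k2" using S Sd by auto
          have e': "real_of_int k3 + real_of_int (k1 - k) = real_of_int k2" using e by linarith
          have "k3 \<in> {x. \<bar>real_of_int x\<bar> \<le> N3 \<and> \<bar>real_of_int x + real_of_int (k1 - k)\<bar> \<le> N2 \<and>
              \<bar>FF \<alpha> (real_of_int (k1 - k)) (real_of_int x) - (h k1 - h k - m)\<bar> \<le> C0}"
          proof -
            have S': "k = k1 - k2 + k3 \<and> k2 \<noteq> k1 \<and> k2 \<noteq> k3 \<and>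
              \<bar>h k1 - h k2 + h k3 - h k - m\<bar> \<le> C0 \<and>
              \<bar>real_of_int k\<bar> \<le> N \<and> \<bar>real_of_int k1\<bar> \<le> N1 \<and>
              \<bar>real_of_int k2\<bar> \<le> N2 \<and> \<bar>real_of_int k3\<bar> \<le> N3" using Sd[THEN iffD1, OF S] .
            have hx: "h (k3 + (k1 - k)) = h k2" using e by simp
            show ?thesis using S' unfolding mem_Collect_eq hFF hx e' abs_le_iff by linarith
          qed
          then show "p \<in> (\<lambda>x. (x + (k1 - k), x)) ` {x. \<bar>real_of_int x\<bar> \<le> N3 \<and> \<bar>real_of_int x + real_of_int (k1 - k)\<bar> \<le> N2 \<and>
              \<bar>FF \<alpha> (real_of_int (k1 - k)) (real_of_int x) - (h k1 - h k - m)\<bar> \<le> C0}"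
            by (rule rev_image_eqI) (simp add: p e)
        qed
      qed
      then show ?thesis by (simp add: min.commute)
    qed
    show "real (card {(k1, k2). (k, k1, k2, k3) \<in> ?S})
        \<le> K * ((min N1 N2) powr (2 - \<alpha>) / jbr (real_of_int (k - k3)) + 1)" for k k3
    proof -
      have "real (card {(k1, k2). (k, k1, k2, k3) \<in> ?S})
          \<le> K * ((min N2 N1) powr (2 - \<alpha>) / jbr (real_of_int (k - k3)) + 1)"
        unfolding K_def
      proof (rule transfer[OF a1 a2 C0 n2 n1, where g="\<lambda>x. (x + (k - k3), x)" and c="h k - h k3 + m"])
        show "k - k3 = 0 \<Longrightarrow> {(k1, k2). (k, k1, k2, k3) \<in> ?S} = {}" using Sd by auto
        show "{(k1, k2). (k, k1, k2, k3) \<in> ?S} \<subseteq> (\<lambda>x. (x + (k - k3), x)) `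
          {x. \<bar>real_of_int x\<bar> \<le> N2 \<and> \<bar>real_of_int x + real_of_int (k - k3)\<bar> \<le> N1 \<and>
              \<bar>FF \<alpha> (real_of_int (k - k3)) (real_of_int x) - (h k - h k3 + m)\<bar> \<le> C0}"
        proof
          fix p assume "p \<in> {(k1, k2). (k, k1, k2, k3) \<in> ?S}"
          then obtain k1 k2 where p: "p = (k1, k2)" and S: "(k, k1, k2, k3) \<in> ?S" by blast
          have e: "k2 + (k - k3) = k1" using S Sd by auto
          have e': "real_of_int k2 + real_of_int (k - k3) = real_of_int k1" using e by linarith
          have "k2 \<in> {x. \<bar>real_of_int x\<bar> \<le> N2 \<and> \<bar>real_of_int x + real_of_int (k - k3)\<bar> \<le> N1 \<and>
              \<bar>FF \<alpha> (real_of_int (k - k3)) (real_of_int x) - (h k - h k3 + m)\<bar> \<le> C0}"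
          proof -
            have S': "k = k1 - k2 + k3 \<and> k2 \<noteq> k1 \<and> k2 \<noteq> k3 \<and>
              \<bar>h k1 - h k2 + h k3 - h k - m\<bar> \<le> C0 \<and>
              \<bar>real_of_int k\<bar> \<le> N \<and> \<bar>real_of_int k1\<bar> \<le> N1 \<and>
              \<bar>real_of_int k2\<bar> \<le> N2 \<and> \<bar>real_of_int k3\<bar> \<le> N3" using Sd[THEN iffD1, OF S] .
            have hx: "h (k2 + (k - k3)) = h k1" using e by simp
            show ?thesis using S' unfolding mem_Collect_eq hFF hx e' abs_le_iff by linarith
          qed
          then show "p \<in> (\<lambda>x. (x + (k - k3), x)) ` {x. \<bar>real_of_int x\<bar> \<le> N2 \<and> \<bar>real_of_int x + real_of_int (k - k3)\<bar> \<le> N1 \<and>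
              \<bar>FF \<alpha> (real_of_int (k - k3)) (real_of_int x) - (h k - h k3 + m)\<bar> \<le> C0}"
            by (rule rev_image_eqI) (simp add: p e)
        qed
      qed
      then show ?thesis by (simp add: min.commute)
    qed
    show "real (card {(k, k3). (k, k1, k2, k3) \<in> ?S})
        \<le> K * (N3 powr (2 - \<alpha>) / jbr (real_of_int (k1 - k2)) + 1)" for k1 k2
    proof -
      have "real (card {(k, k3). (k, k1, k2, k3) \<in> ?S})
          \<le> K * ((min N3 N) powr (2 - \<alpha>) / jbr (real_of_int (k1 - k2)) + 1)"
        unfolding K_def
      proof (rule transfer[OF a1 a2 C0 n3 n, where g="\<lambda>x. (x + (k1 - k2), x)" and c="h k1 - h k2 - m"])
        show "k1 - k2 = 0 \<Longrightarrow> {(k, k3). (k, k1, k2, k3) \<in> ?S} = {}" using Sd by auto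
        show "{(k, k3). (k, k1, k2, k3) \<in> ?S} \<subseteq> (\<lambda>x. (x + (k1 - k2), x)) `
          {x. \<bar>real_of_int x\<bar> \<le> N3 \<and> \<bar>real_of_int x + real_of_int (k1 - k2)\<bar> \<le> N \<and>
              \<bar>FF \<alpha> (real_of_int (k1 - k2)) (real_of_int x) - (h k1 - h k2 - m)\<bar> \<le> C0}"
        proof
          fix p assume "p \<in> {(k, k3). (k, k1, k2, k3) \<in> ?S}"
          then obtain k k3 where p: "p = (k, k3)" and S: "(k, k1, k2, k3) \<in> ?S" by blast
          have e: "k3 + (k1 - k2) = k" using S Sd by auto
          have e': "real_of_int k3 + real_of_int (k1 - k2) = real_of_int k" using e by linarith
          have "k3 \<in> {x. \<bar>real_of_int x\<bar> \<le> N3 \<and> \<bar>real_of_int x + real_of_int (k1 - k2)\<bar> \<le> N \<and>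
              \<bar>FF \<alpha> (real_of_int (k1 - k2)) (real_of_int x) - (h k1 - h k2 - m)\<bar> \<le> C0}"
          proof -
            have S': "k = k1 - k2 + k3 \<and> k2 \<noteq> k1 \<and> k2 \<noteq> k3 \<and>
              \<bar>h k1 - h k2 + h k3 - h k - m\<bar> \<le> C0 \<and>
              \<bar>real_of_int k\<bar> \<le> N \<and> \<bar>real_of_int k1\<bar> \<le> N1 \<and>
              \<bar>real_of_int k2\<bar> \<le> N2 \<and> \<bar>real_of_int k3\<bar> \<le> N3" using Sd[THEN iffD1, OF S] .
            have hx: "h (k3 + (k1 - k2)) = h k" using e by simp
            show ?thesis using S' unfolding mem_Collect_eq hFF hx e' abs_le_iff by linarith
          qed
          then show "p \<in> (\<lambda>x. (x + (k1 - k2), x)) ` {x. \<bar>real_of_int x\<bar> \<le> N3 \<and> \<bar>real_of_int x + real_of_int (k1 - k2)\<bar> \<le> N \<and>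
              \<bar>FF \<alpha> (real_of_int (k1 - k2)) (real_of_int x) - (h k1 - h k2 - m)\<bar> \<le> C0}"
            by (rule rev_image_eqI) (simp add: p e)
        qed
      qed
      then show ?thesis using l3 by (simp add: min_absorb1)
    qed
    show "real (card {(k, k1). (k, k1, k2, k3) \<in> ?S})
        \<le> K * (N1 powr (2 - \<alpha>) / jbr (real_of_int (k2 - k3)) + 1)" for k2 k3
    proof -
      have "real (card {(k, k1). (k, k1, k2, k3) \<in> ?S})
          \<le> K * ((min N N1) powr (2 - \<alpha>) / jbr (real_of_int (k2 - k3)) + 1)"
        unfolding K_def
      proof (rule transfer[OF a1 a2 C0 n n1, where g="\<lambda>x. (x, x + (k2 - k3))" and c="h k2 - h k3 + m"])
        show "k2 - k3 = 0 \<Longrightarrow> {(k, k1). (k, k1, k2, k3) \<in> ?S} = {}" using Sd by auto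
        show "{(k, k1). (k, k1, k2, k3) \<in> ?S} \<subseteq> (\<lambda>x. (x, x + (k2 - k3))) `
          {x. \<bar>real_of_int x\<bar> \<le> N \<and> \<bar>real_of_int x + real_of_int (k2 - k3)\<bar> \<le> N1 \<and>
              \<bar>FF \<alpha> (real_of_int (k2 - k3)) (real_of_int x) - (h k2 - h k3 + m)\<bar> \<le> C0}"
        proof
          fix p assume "p \<in> {(k, k1). (k, k1, k2, k3) \<in> ?S}"
          then obtain k k1 where p: "p = (k, k1)" and S: "(k, k1, k2, k3) \<in> ?S" by blast
          have e: "k + (k2 - k3) = k1" using S Sd by auto
          have e': "real_of_int k + real_of_int (k2 - k3) = real_of_int k1" using e by linarith
          have "k \<in> {x. \<bar>real_of_int x\<bar> \<le> N \<and> \<bar>real_of_int x + real_of_int (k2 - k3)\<bar> \<le> N1 \<and>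
              \<bar>FF \<alpha> (real_of_int (k2 - k3)) (real_of_int x) - (h k2 - h k3 + m)\<bar> \<le> C0}"
          proof -
            have S': "k = k1 - k2 + k3 \<and> k2 \<noteq> k1 \<and> k2 \<noteq> k3 \<and>
              \<bar>h k1 - h k2 + h k3 - h k - m\<bar> \<le> C0 \<and>
              \<bar>real_of_int k\<bar> \<le> N \<and> \<bar>real_of_int k1\<bar> \<le> N1 \<and>
              \<bar>real_of_int k2\<bar> \<le> N2 \<and> \<bar>real_of_int k3\<bar> \<le> N3" using Sd[THEN iffD1, OF S] .
            have hx: "h (k + (k2 - k3)) = h k1" using e by simp
            show ?thesis using S' unfolding mem_Collect_eq hFF hx e' abs_le_iff by linarith
          qed
          then show "p \<in> (\<lambda>x. (x, x + (k2 - k3))) ` {x. \<bar>real_of_int x\<bar> \<le> N \<and> \<bar>real_of_int x + real_of_int (k2 - k3)\<bar> \<le> N1 \<and>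
              \<bar>FF \<alpha> (real_of_int (k2 - k3)) (real_of_int x) - (h k2 - h k3 + m)\<bar> \<le> C0}"
            by (rule rev_image_eqI) (simp add: p e)
        qed
      qed
      then show ?thesis using l1 by (simp add: min_absorb2)
    qed
  qed
qed

end
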